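(* Let $n\ge 2$ and for $R>0$ let $\mathcal{B}_n(R)$ be the set of bi-Perron algebraic units $\lambda\le R$ whose characteristic polynomial has degree at most $2n$. Then $|\mathcal{B}_n(R)|\sim R^{n(n+1)/2}$.
   Context: An algebraic integer $\lambda>1$ is bi-Perron if all its Galois conjugates lie in the annulus $\{z\in\mathbb{C}:1/\lambda\le|z|\le\lambda\}$. The characteristic polynomial of a bi-Perron algebraic unit $\lambda$ is the monic palindromic integer polynomial of lowest degree having $\lambda$ as its leading root. For positive functions $f,g$, $f\sim g$ means there is a constant $C>0$ with $\frac1C f(R)\le g(R)\le Cf(R)$ for all sufficiently large $R$. $|A|$ denotes the cardinality of a finite set $A$. *)

theory Defs
  imports "HOL-Analysis.Analysis" "HOL-Computational_Algebra.Polynomial"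
begin

definition ipoly :: "int poly \<Rightarrow> 'a::{comm_ring_1} \<Rightarrow> 'a" where
  "ipoly p x = poly (map_poly of_int p) x"

definition algebraic_integer_real :: "real \<Rightarrow> bool" where
  "algebraic_integer_real x \<longleftrightarrow> (\<exists>p. lead_coeff p = 1 \<and> ipoly p x = 0)"

definition algebraic_unit_real :: "real \<Rightarrow> bool" where
  "algebraic_unit_real x \<longleftrightarrow> algebraic_integer_real x \<and> algebraic_integer_real (1 / x)"

text \<open>z is a Galois conjugate of the algebraic number x iff z is a root of the minimal
  polynomial of x, i.e. z is a root of every integer polynomial vanishing at x.\<close>
definition galois_conjugate :: "real \<Rightarrow> complex \<Rightarrow> bool" where
  "galois_conjugate x z \<longleftrightarrow> (\<forall>p. ipoly p (complex_of_real x) = 0 \<longrightarrow> ipoly p z = 0)"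

definition bi_Perron :: "real \<Rightarrow> bool" where
  "bi_Perron x \<longleftrightarrow> x > 1 \<and> algebraic_integer_real x \<and>
     (\<forall>z. galois_conjugate x z \<longrightarrow> 1 / x \<le> cmod z \<and> cmod z \<le> x)"

definition palindromic :: "int poly \<Rightarrow> bool" where
  "palindromic p \<longleftrightarrow> (\<forall>i\<le>degree p. coeff p i = coeff p (degree p - i))"

definition monic_palindromic_leading :: "real \<Rightarrow> int poly \<Rightarrow> bool" where
  "monic_palindromic_leading x p \<longleftrightarrow> lead_coeff p = 1 \<and> palindromic p \<and> ipoly p x = 0 \<and>
     (\<forall>z::complex. ipoly p z = 0 \<longrightarrow> cmod z \<le> x)"

definition char_poly :: "real \<Rightarrow> int poly \<Rightarrow> bool" where
  "char_poly x p \<longleftrightarrow> monic_palindromic_leading x p \<and>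
     (\<forall>q. monic_palindromic_leading x q \<longrightarrow> degree p \<le> degree q)"

definition B :: "nat \<Rightarrow> real \<Rightarrow> real set" where
  "B n R = {x. bi_Perron x \<and> algebraic_unit_real x \<and> x \<le> R \<and>
              (\<exists>p. char_poly x p \<and> degree p \<le> 2 * n)}"

end

theory Submission
  imports Defs "Berlekamp_Zassenhaus.Factor_Bound"
begin

hide_const (open) up_ring.coeff up_ring.monom module.smult



lemma ipoly_of_real: "ipoly p (complex_of_real x) = complex_of_real (ipoly p x)"
proof -
  have "(map_poly of_int p :: complex poly) = map_poly of_real (map_poly of_int p :: real poly)"
    by (simp add: map_poly_map_poly o_def)
  thus ?thesis unfolding ipoly_def by (simp add: of_real_hom.poly_map_poly)
qed

lemma palindromic_reflect:
  fixes P :: "'a::field poly"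
  assumes "\<forall>i\<le>degree P. coeff P i = coeff P (degree P - i)"
  shows "reflect_poly P = P"
proof (rule poly_eqI)
  fix i show "coeff (reflect_poly P) i = coeff P i"
  proof (cases "i \<le> degree P")
    case True
    then show ?thesis using assms[rule_format, of i] by (simp add: coeff_reflect_poly)
  next
    case False
    then show ?thesis by (simp add: coeff_reflect_poly coeff_eq_0)
  qed
qed

lemma palindromic_map:
  fixes p :: "int poly"
  assumes "palindromic p"
  shows "reflect_poly (map_poly of_int p :: 'a::field_char_0 poly) = map_poly of_int p"
proof (rule palindromic_reflect, intro allI impI)
  fix i assume "i \<le> degree (map_poly of_int p :: 'a poly)"
  hence i: "i \<le> degree p" by (simp add: of_int_hom.degree_map_poly_hom)
  have "coeff p i = coeff p (degree p - i)" using assms i unfolding palindromic_def by blast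
  thus "coeff (map_poly of_int p :: 'a poly) i = coeff (map_poly of_int p) (degree (map_poly of_int p :: 'a poly) - i)"
    by (simp add: of_int_hom.degree_map_poly_hom)
qed

lemma palindromic_root_inv:
  fixes p :: "int poly" and z :: "'a::field_char_0"
  assumes "palindromic p" "ipoly p z = 0" "z \<noteq> 0"
  shows "ipoly p (1 / z) = 0"
proof -
  have "poly (reflect_poly (map_poly of_int p :: 'a poly)) z = z ^ degree (map_poly of_int p :: 'a poly) * poly (map_poly of_int p) (inverse z)"
    using assms(3) by (rule poly_reflect_poly_nz)
  hence "0 = z ^ degree (map_poly of_int p :: 'a poly) * ipoly p (1/z)"
    using assms(2) unfolding palindromic_map[OF assms(1)] ipoly_def by (simp add: divide_inverse)
  thus ?thesis using assms(3) by simp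
qed

lemma ipoly_0_coeff: "ipoly p (0::'a::comm_ring_1) = of_int (coeff p 0)"
  unfolding ipoly_def by (simp add: poly_0_coeff_0)

lemma palindromic_monic_coeff0:
  assumes "palindromic p" "lead_coeff p = 1"
  shows "coeff p 0 = 1"
proof -
  have "coeff p 0 = coeff p (degree p - 0)" using assms(1) unfolding palindromic_def by blast
  thus ?thesis using assms(2) by simp
qed

lemma mpl_imp_B:
  assumes "x > 1" "x \<le> R" "monic_palindromic_leading x p" "degree p \<le> 2 * n"
  shows "x \<in> B n R"
proof -
  let ?P = "\<lambda>d. \<exists>q. monic_palindromic_leading x q \<and> degree q = d"
  have ex: "?P (degree p)" using assms(3) by blast
  define d where "d = (LEAST d. ?P d)"
  have "?P d" unfolding d_def using ex by (rule LeastI)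
  then obtain q where q: "monic_palindromic_leading x q" "degree q = d" by blast
  have dle: "d \<le> degree p" unfolding d_def using ex by (rule Least_le)
  have cq: "char_poly x q" unfolding char_poly_def
  proof (intro conjI allI impI)
    show "monic_palindromic_leading x q" by fact
    fix r assume "monic_palindromic_leading x r"
    hence "?P (degree r)" by blast
    hence "d \<le> degree r" unfolding d_def by (rule Least_le)
    thus "degree q \<le> degree r" using q(2) by simp
  qed
  from q(1) have lc: "lead_coeff q = 1" and pal: "palindromic q" and rt: "ipoly q x = 0"
    and lead: "\<forall>z::complex. ipoly q z = 0 \<longrightarrow> cmod z \<le> x"
    unfolding monic_palindromic_leading_def by auto
  have ai: "algebraic_integer_real x" unfolding algebraic_integer_real_def using lc rt by blast
  have "ipoly q (1/x) = 0" using palindromic_root_inv[OF pal rt] assms(1) by simp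
  hence ai2: "algebraic_integer_real (1/x)" unfolding algebraic_integer_real_def using lc by blast
  have c0: "coeff q 0 = 1" using palindromic_monic_coeff0[OF pal lc] .
  have bp: "bi_Perron x" unfolding bi_Perron_def
  proof (intro conjI allI impI)
    show "x > 1" by fact
    show "algebraic_integer_real x" by fact
    fix z assume gc: "galois_conjugate x z"
    have rtc: "ipoly q (complex_of_real x) = 0" using rt by (simp add: ipoly_of_real)
    hence zr: "ipoly q z = 0" using gc unfolding galois_conjugate_def by blast
    thus "cmod z \<le> x" using lead by blast
    have "ipoly q (0::complex) = 1" using c0 by (simp add: ipoly_0_coeff)
    hence z0: "z \<noteq> 0" using zr by auto
    have "ipoly q (1/z) = 0" by (rule palindromic_root_inv[OF pal zr z0])
    hence "cmod (1/z) \<le> x" using lead by blast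
    hence "1 / cmod z \<le> x" by (simp add: norm_divide)
    moreover have "cmod z > 0" using z0 by simp
    ultimately have "1 \<le> x * cmod z" using pos_divide_le_eq[of "cmod z" 1 x] by simp
    thus "1 / x \<le> cmod z" using pos_divide_le_eq[of x 1 "cmod z"] assms(1) by (simp add: mult.commute)
  qed
  have ex2: "\<exists>p. char_poly x p \<and> degree p \<le> 2*n" using cq dle assms(4) q(2) by auto
  show ?thesis unfolding B_def algebraic_unit_real_def
    using bp ai ai2 assms(2) ex2 by blast
qed


lemma degree_prod_lin: "degree (\<Prod>a\<leftarrow>as. [:- a, 1::'a::idom:]) = length as"
  using degree_linear_factors[of uminus as] by simp

lemma coeff_prod_bound:
  fixes as :: "complex list" and M :: real
  assumes "\<forall>a\<in>set as. cmod a \<le> M" "1 \<le> M"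
  shows "cmod (coeff (\<Prod>a\<leftarrow>as. [:-a,1:]) i) \<le> 2^length as * M^(length as - i)"
  using assms(1)
proof (induction as arbitrary: i)
  case Nil
  then show ?case by (cases i) auto
next
  case (Cons a as)
  define r where "r = (\<Prod>a\<leftarrow>as. [:-a,1:])"
  define m where "m = length as"
  have IH: "cmod (coeff r j) \<le> 2^m * M^(m - j)" for j
    using Cons unfolding r_def m_def by auto
  have aM: "cmod a \<le> M" using Cons.prems by auto
  have dr: "degree r = m" unfolding r_def m_def by (rule degree_prod_lin)
  have eq: "(\<Prod>b\<leftarrow>a#as. [:-b,1:]) = pCons 0 r + Polynomial.smult (-a) r"
    unfolding r_def by (simp add: mult_pCons_left)
  have M0: "0 \<le> M" using assms(2) by simp
  show ?case
  proof (cases i)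
    case 0
    have "cmod (coeff (\<Prod>b\<leftarrow>a#as. [:-b,1:]) i) = cmod a * cmod (coeff r 0)"
      unfolding eq 0 by (simp add: norm_mult)
    also have "\<dots> \<le> M * (2^m * M^m)"
      using IH[of 0] aM M0 by (intro mult_mono) auto
    also have "\<dots> \<le> 2^(Suc m) * M^(Suc m)" using M0 by simp
    finally show ?thesis unfolding m_def 0 by simp
  next
    case (Suc j)
    have "cmod (coeff (\<Prod>b\<leftarrow>a#as. [:-b,1:]) i) = cmod (coeff r j - a * coeff r (Suc j))"
      unfolding eq Suc by simp
    also have "\<dots> \<le> cmod (coeff r j) + cmod a * cmod (coeff r (Suc j))"
      using norm_triangle_ineq4[of "coeff r j" "a * coeff r (Suc j)"] by (simp add: norm_mult)
    also have "\<dots> \<le> 2^(Suc m) * M^(Suc m - Suc j)"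
    proof (cases "j < m")
      case True
      have "cmod a * cmod (coeff r (Suc j)) \<le> M * (2^m * M^(m - Suc j))"
        using IH[of "Suc j"] aM M0 by (intro mult_mono) auto
      also have "\<dots> = 2^m * M^(m - j)"
      proof -
        have "m - j = Suc (m - Suc j)" using True by simp
        thus ?thesis by simp
      qed
      finally show ?thesis using IH[of j] by simp
    next
      case False
      have "coeff r (Suc j) = 0" using False dr by (simp add: coeff_eq_0)
      have h1: "cmod (coeff r j) \<le> 2^m" using IH[of j] False by simp
      have h2: "(2::real)^m \<le> 2*2^m" by simp
      have "cmod (coeff r j) \<le> 2*2^m" using h1 h2 by linarith
      thus ?thesis using \<open>coeff r (Suc j) = 0\<close> False by simp
    qed
    finally show ?thesis unfolding m_def Suc by simp
  qed
qed

definition PS :: "nat \<Rightarrow> real \<Rightarrow> int poly set" where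
  "PS n R = {p. lead_coeff p = 1 \<and> palindromic p \<and> degree p \<le> 2*n \<and>
     (\<forall>z::complex. ipoly p z = 0 \<longrightarrow> cmod z \<le> R)}"

lemma PS_coeff_bound:
  assumes R: "R \<ge> 1" and p: "p \<in> PS n R" and i: "i \<le> n"
  shows "\<bar>real_of_int (coeff p i)\<bar> \<le> 4^n * R^i"
proof (cases "i \<le> degree p")
  case False
  hence "coeff p i = 0" by (simp add: coeff_eq_0)
  thus ?thesis using R by simp
next
  case True
  have lc: "lead_coeff p = 1" and pal: "palindromic p" and dg: "degree p \<le> 2*n"
    and rts: "\<forall>z::complex. ipoly p z = 0 \<longrightarrow> cmod z \<le> R" using p unfolding PS_def by auto
  obtain as where as: "Polynomial.smult (coeff (map_poly of_int p :: complex poly) (degree (map_poly of_int p :: complex poly))) (\<Prod>a\<leftarrow>as. [:- a, 1:]) = map_poly of_int p"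
    "length as = degree (map_poly of_int p :: complex poly)"
    using fundamental_theorem_algebra_factorized by blast
  have lc': "coeff (map_poly of_int p :: complex poly) (degree (map_poly of_int p :: complex poly)) = 1"
    using lc by (simp add: of_int_hom.degree_map_poly_hom)
  have eq: "(\<Prod>a\<leftarrow>as. [:- a, 1:]) = (map_poly of_int p :: complex poly)" using as(1) unfolding lc' by simp
  have len: "length as = degree p" using as(2) by (simp add: of_int_hom.degree_map_poly_hom)
  have "\<forall>a\<in>set as. cmod a \<le> R"
  proof
    fix a assume "a \<in> set as"
    hence "poly (\<Prod>a\<leftarrow>as. [:- a, 1:]) a = 0" by (rule linear_poly_root)
    hence "ipoly p a = 0" unfolding ipoly_def eq .
    thus "cmod a \<le> R" using rts by blast
  qed
  from coeff_prod_bound[OF this R, of "degree p - i"]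
  have "cmod (coeff (map_poly of_int p :: complex poly) (degree p - i)) \<le> 2^degree p * R^i"
    unfolding eq len using True by simp
  moreover have "coeff p i = coeff p (degree p - i)" using pal True unfolding palindromic_def by blast
  ultimately have "\<bar>real_of_int (coeff p i)\<bar> \<le> 2^degree p * R^i" by simp
  also have "\<dots> \<le> 2^(2*n) * R^i"
    using dg R by (intro mult_right_mono power_increasing) auto
  also have "\<dots> = 4^n * R^i" by (simp add: power_mult)
  finally show ?thesis .
qed

lemma int_le_floor: "\<bar>real_of_int c\<bar> \<le> K \<Longrightarrow> c \<in> {-\<lfloor>K\<rfloor>..\<lfloor>K\<rfloor>}"
proof -
  assume a: "\<bar>real_of_int c\<bar> \<le> K"
  have "c \<le> \<lfloor>K\<rfloor>" using a by (simp add: le_floor_iff abs_le_iff)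
  moreover have "- c \<le> \<lfloor>K\<rfloor>" using a by (simp add: le_floor_iff abs_le_iff)
  ultimately show ?thesis by simp
qed

lemma PS_card:
  assumes R: "R \<ge> 1"
  shows "finite (PS n R) \<and> real (card (PS n R)) \<le> (2*real n+1) * ((3*4^n)^(n+1) * R^(n*(n+1) div 2))"
proof -
  define K :: real where "K = 4^n"
  define Box where "Box i = {-\<lfloor>K * R^i\<rfloor>..\<lfloor>K * R^i\<rfloor>}" for i :: nat
  define g where "g p = (degree p, restrict (\<lambda>i. coeff p i) {0..n})" for p :: "int poly"
  define T where "T = {0..2*n} \<times> PiE {0..n} Box"
  have sub: "g ` PS n R \<subseteq> T"
  proof
    fix y assume "y \<in> g ` PS n R"
    then obtain p where p: "p \<in> PS n R" and y: "y = g p" by blast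
    have "degree p \<le> 2*n" using p unfolding PS_def by auto
    moreover have "coeff p i \<in> Box i" if "i \<in> {0..n}" for i
      unfolding Box_def K_def using PS_coeff_bound[OF R p, of i] that by (intro int_le_floor) auto
    ultimately show "y \<in> T" unfolding y g_def T_def by auto
  qed
  have inj: "inj_on g (PS n R)"
  proof
    fix p q assume p: "p \<in> PS n R" and q: "q \<in> PS n R" and e: "g p = g q"
    have dpq: "degree p = degree q" using e unfolding g_def by simp
    have cpq: "coeff p i = coeff q i" if "i \<le> n" for i
    proof -
      have "restrict (\<lambda>i. coeff p i) {0..n} i = restrict (\<lambda>i. coeff q i) {0..n} i"
        using e unfolding g_def by simp
      thus ?thesis using that by simp
    qed
    have pp: "palindromic p" "degree p \<le> 2*n" using p unfolding PS_def by auto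
    have pq: "palindromic q" using q unfolding PS_def by auto
    show "p = q"
    proof (rule poly_eqI)
      fix j
      show "coeff p j = coeff q j"
      proof (cases "j \<le> n")
        case True thus ?thesis by (rule cpq)
      next
        case False
        show ?thesis
        proof (cases "j \<le> degree p")
          case True
          have "coeff p j = coeff p (degree p - j)" using pp(1) True unfolding palindromic_def by blast
          moreover have "coeff q j = coeff q (degree q - j)"
          proof -
            have "j \<le> degree q" using True dpq by simp
            thus ?thesis using pq unfolding palindromic_def by blast
          qed
          moreover have "degree p - j \<le> n" using pp(2) False by simp
          ultimately show ?thesis using cpq dpq by simp
        next
          case False
          thus ?thesis using dpq by (simp add: coeff_eq_0)
        qed
      qed
    qed
  qed
  have finT: "finite T" unfolding T_def Box_def by (intro finite_cartesian_product finite_PiE) auto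
  have "finite (g ` PS n R)" using finite_subset[OF sub finT] .
  hence finP: "finite (PS n R)" using finite_imageD inj by blast
  have "card (PS n R) \<le> card T" using card_inj_on_le[OF inj sub finT] .
  hence "real (card (PS n R)) \<le> real (card T)" by simp
  also have "real (card T) = (2*n+1) * (\<Prod>i\<in>{0..n}. real (card (Box i)))"
    unfolding T_def by (simp add: card_cartesian_product card_PiE algebra_simps)
  also have "\<dots> \<le> (2*n+1) * (\<Prod>i\<in>{0..n}. 3 * K * R^i)"
  proof (intro mult_left_mono prod_mono conjI)
    fix i assume "i \<in> {0..n}"
    have r1: "1 \<le> R^i" using R by (rule one_le_power)
    have k1: "1 \<le> K" unfolding K_def by simp
    have k0: "0 \<le> K" using k1 by simp
    have KR: "1 \<le> K * R^i" using mult_mono[OF k1 r1 k0] by simp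
    have "real (card (Box i)) = real (nat (2 * \<lfloor>K * R^i\<rfloor> + 1))" unfolding Box_def by simp
    also have "\<dots> = 2 * of_int \<lfloor>K * R^i\<rfloor> + 1"
    proof -
      have "0 \<le> 2 * \<lfloor>K * R^i\<rfloor> + 1" using KR by linarith
      thus ?thesis by (simp only: of_nat_nat)
    qed
    also have "\<dots> \<le> 3 * K * R^i" using KR by linarith
    finally show "real (card (Box i)) \<le> 3 * K * R^i" .
  next
    show "0 \<le> real (2*n+1)" by simp
  next
    fix i show "0 \<le> real (card (Box i))" by simp
  qed
  also have "(2*n+1) * (\<Prod>i\<in>{0..n}. 3 * K * R^i) = (2*n+1) * ((3*K)^(n+1) * R^(n*(n+1) div 2))"
  proof -
    have "2 * (\<Sum>i\<in>{0..n}. i) = n*(n+1)" by (induction n) auto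
    hence gs: "(\<Sum>i\<in>{0..n}. i) = n*(n+1) div 2" by simp
    have "(\<Prod>i\<in>{0..n}. 3 * K * R^i) = (3*K)^(n+1) * R^(\<Sum>i\<in>{0..n}. i)"
      by (simp add: prod.distrib power_sum)
    thus ?thesis unfolding gs by simp
  qed
  finally have c: "real (card (PS n R)) \<le> (2*n+1) * ((3*K)^(n+1) * R^(n*(n+1) div 2))" .
  have "real (card (PS n R)) \<le> (2*real n+1) * ((3*4^n)^(n+1) * R^(n*(n+1) div 2))"
    using c unfolding K_def by (simp add: algebra_simps)
  with finP show ?thesis by blast
qed

lemma B_upper:
  assumes R: "R \<ge> 1"
  shows "finite (B n R) \<and> card (B n R) \<le> card (PS n R)"
proof -
  define f where "f x = (SOME p. char_poly x p \<and> degree p \<le> 2 * n)" for x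
  have fx: "char_poly x (f x) \<and> degree (f x) \<le> 2*n" if "x \<in> B n R" for x
  proof -
    have "\<exists>p. char_poly x p \<and> degree p \<le> 2 * n" using that unfolding B_def by blast
    from someI_ex[OF this] show ?thesis unfolding f_def .
  qed
  have sub: "f ` B n R \<subseteq> PS n R"
  proof
    fix y assume "y \<in> f ` B n R"
    then obtain x where x: "x \<in> B n R" and y: "y = f x" by blast
    have "x \<le> R" using x unfolding B_def by auto
    have m: "monic_palindromic_leading x (f x)" and d: "degree (f x) \<le> 2*n"
      using fx[OF x] unfolding char_poly_def by auto
    have "\<forall>z::complex. ipoly (f x) z = 0 \<longrightarrow> cmod z \<le> R"
      using m \<open>x \<le> R\<close> unfolding monic_palindromic_leading_def by force
    thus "y \<in> PS n R" using m d unfolding y PS_def monic_palindromic_leading_def by blast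
  qed
  have inj: "inj_on f (B n R)"
  proof
    fix x y assume x: "x \<in> B n R" and y: "y \<in> B n R" and e: "f x = f y"
    have x1: "x > 1" and y1: "y > 1" using x y unfolding B_def bi_Perron_def by auto
    have mx: "monic_palindromic_leading x (f x)" and my: "monic_palindromic_leading y (f x)"
      using fx[OF x] fx[OF y] e unfolding char_poly_def by auto
    have "ipoly (f x) (complex_of_real x) = 0" using mx unfolding monic_palindromic_leading_def
      by (simp add: ipoly_of_real)
    hence "cmod (complex_of_real x) \<le> y" using my unfolding monic_palindromic_leading_def by blast
    hence xy: "x \<le> y" using x1 by simp
    have "ipoly (f x) (complex_of_real y) = 0" using my unfolding monic_palindromic_leading_def
      by (simp add: ipoly_of_real)
    hence "cmod (complex_of_real y) \<le> x" using mx unfolding monic_palindromic_leading_def by blast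
    hence "y \<le> x" using y1 by simp
    thus "x = y" using xy by simp
  qed
  have finP: "finite (PS n R)" using PS_card[OF R] by blast
  have "finite (f ` B n R)" using finite_subset[OF sub finP] .
  hence "finite (B n R)" using finite_imageD inj by blast
  moreover have "card (B n R) \<le> card (PS n R)" using card_inj_on_le[OF inj sub finP] .
  ultimately show ?thesis by simp
qed



definition eis :: "int poly \<Rightarrow> bool" where
  "eis q \<longleftrightarrow> lead_coeff q = 1 \<and> (\<forall>j<degree q. even (coeff q j)) \<and> \<not> 4 dvd coeff q 0"

lemma eis_aux:
  fixes q g h :: "int poly"
  assumes e: "eis q" and qgh: "q = g * h" and g0: "even (coeff g 0)" and h0: "odd (coeff h 0)"
    and dh: "degree h > 0"
  shows False
proof -
  have lq: "lead_coeff q = 1" and ev: "\<forall>j<degree q. even (coeff q j)" using e unfolding eis_def by auto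
  have gnz: "g \<noteq> 0" and hnz: "h \<noteq> 0" using lq qgh by auto
  have "lead_coeff g * lead_coeff h = 1" using lq qgh by (simp add: lead_coeff_mult)
  hence lg: "odd (lead_coeff g)" by (metis even_mult_iff odd_one)
  define P where "P i = odd (coeff g i)" for i
  have exP: "P (degree g)" using lg unfolding P_def by simp
  define i where "i = (LEAST i. P i)"
  have Pi: "P i" unfolding i_def using exP by (rule LeastI)
  have ile: "i \<le> degree g" unfolding i_def using exP by (rule Least_le)
  have lt: "even (coeff g k)" if "k < i" for k
    using not_less_Least[of k P] that unfolding i_def P_def by auto
  have dq: "degree q = degree g + degree h" using qgh gnz hnz by (simp add: degree_mult_eq)
  have iq: "i < degree q" using ile dh dq by simp
  have "coeff q i = (\<Sum>k\<le>i. coeff g k * coeff h (i - k))" unfolding qgh by (rule coeff_mult)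
  also have "\<dots> = (\<Sum>k<i. coeff g k * coeff h (i - k)) + coeff g i * coeff h 0"
    by (simp add: lessThan_Suc_atMost[symmetric])
  finally have eqc: "coeff q i = (\<Sum>k<i. coeff g k * coeff h (i - k)) + coeff g i * coeff h 0" .
  have "even (\<Sum>k<i. coeff g k * coeff h (i - k))"
    by (rule dvd_sum) (use lt in auto)
  moreover have "odd (coeff g i * coeff h 0)" using Pi h0 unfolding P_def by simp
  ultimately have "odd (coeff q i)" unfolding eqc by simp
  thus False using ev iq by blast
qed

lemma eis_irred:
  fixes q g h :: "int poly"
  assumes e: "eis q" and qgh: "q = g * h"
  shows "degree g = 0 \<or> degree h = 0"
proof (rule ccontr)
  assume "\<not> (degree g = 0 \<or> degree h = 0)"
  hence dg: "degree g > 0" and dh: "degree h > 0" by auto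
  have c0: "coeff q 0 = coeff g 0 * coeff h 0" unfolding qgh by (simp add: coeff_mult)
  have "even (coeff q 0)"
  proof -
    have lq: "lead_coeff q = 1" and ev: "\<forall>j<degree q. even (coeff q j)" using e unfolding eis_def by auto
    have "g \<noteq> 0" "h \<noteq> 0" using lq qgh by auto
    hence "degree q > 0" using qgh dg by (simp add: degree_mult_eq)
    thus ?thesis using ev by blast
  qed
  moreover have n4: "\<not> 4 dvd coeff q 0" using e unfolding eis_def by auto
  ultimately have "(even (coeff g 0) \<and> odd (coeff h 0)) \<or> (odd (coeff g 0) \<and> even (coeff h 0))"
    unfolding c0 by (auto simp: mult_dvd_mono elim!: evenE)
  thus False
  proof
    assume "even (coeff g 0) \<and> odd (coeff h 0)"
    thus False using eis_aux[OF e qgh _ _ dh] by blast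
  next
    assume "odd (coeff g 0) \<and> even (coeff h 0)"
    moreover have "q = h * g" using qgh by (simp add: mult.commute)
    ultimately show False using eis_aux[OF e _ _ _ dg] by blast
  qed
qed

lemma ipoly_rat: "poly (map_poly (of_rat :: rat \<Rightarrow> real) (map_poly rat_of_int q)) y = ipoly q y"
  unfolding ipoly_def by (simp add: map_poly_map_poly o_def)

lemma common_root_eq:
  fixes q1 q2 :: "int poly" and y :: real
  assumes e1: "eis q1" and e2: "eis q2" and d: "degree q1 = degree q2"
    and r1: "ipoly q1 y = 0" and r2: "ipoly q2 y = 0"
  shows "q1 = q2"
proof -
  let ?r = "map_poly rat_of_int"
  let ?R = "map_poly (of_rat :: rat \<Rightarrow> real)"
  define G where "G = gcd (?r q1) (?r q2)"
  define u where "u = fst (bezout_coefficients (?r q1) (?r q2))"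
  define v where "v = snd (bezout_coefficients (?r q1) (?r q2))"
  have bez: "u * ?r q1 + v * ?r q2 = G" unfolding u_def v_def G_def by (rule bezout_coefficients_fst_snd)
  have l1: "lead_coeff q1 = 1" and l2: "lead_coeff q2 = 1" using e1 e2 unfolding eis_def by auto
  have q1nz: "q1 \<noteq> 0" using l1 by auto
  have "poly (?R G) y = poly (?R u) y * poly (?R (?r q1)) y + poly (?R v) y * poly (?R (?r q2)) y"
  proof -
    interpret m: map_poly_comm_ring_hom "of_rat :: rat \<Rightarrow> real" by unfold_locales
    show ?thesis unfolding bez[symmetric] by (simp add: m.hom_add m.hom_mult)
  qed
  hence Gy: "poly (?R G) y = 0" using r1 r2 by (simp add: ipoly_rat)
  have Gnz: "G \<noteq> 0" unfolding G_def using q1nz by simp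
  have dG: "degree G \<noteq> 0"
  proof
    assume "degree G = 0"
    then obtain c where "G = [:c:]" by (metis degree_eq_zeroE)
    hence "poly (?R G) y = of_rat c" and "c \<noteq> 0" using Gnz by auto
    thus False using Gy by simp
  qed
  have "G dvd ?r q1" unfolding G_def by simp
  then obtain H where H: "?r q1 = G * H" by (elim dvdE)
  from rat_to_int_factor[OF H] obtain g' h' where gh: "q1 = g' * h'" "degree g' = degree G" "degree h' = degree H" by blast
  from eis_irred[OF e1 gh(1)] dG gh have dH: "degree H = 0" by simp
  then obtain c1 where c1: "H = [:c1:]" by (metis degree_eq_zeroE)
  have "G dvd ?r q2" unfolding G_def by simp
  then obtain H2 where H2: "?r q2 = G * H2" by (elim dvdE)
  have Hnz: "H \<noteq> 0" using H q1nz by auto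
  have "degree (?r q1) = degree G" using H dH Gnz Hnz by (simp add: degree_mult_eq)
  hence dG2: "degree G = degree q2" using d by (simp add: of_int_hom.degree_map_poly_hom)
  have q2nz: "q2 \<noteq> 0" using l2 by auto
  have H2nz: "H2 \<noteq> 0" using H2 q2nz by auto
  have "degree (?r q2) = degree G + degree H2" using H2 Gnz H2nz by (simp add: degree_mult_eq)
  hence "degree H2 = 0" using dG2 by (simp add: of_int_hom.degree_map_poly_hom)
  then obtain c2 where c2: "H2 = [:c2:]" by (metis degree_eq_zeroE)
  have e1': "?r q1 = Polynomial.smult c1 G" using H c1 by simp
  have e2': "?r q2 = Polynomial.smult c2 G" using H2 c2 by simp
  have "lead_coeff (?r q1) = 1" using l1 by (simp add: of_int_hom.hom_lead_coeff)
  hence "c1 * lead_coeff G = 1" unfolding e1' by (cases "c1 = 0") auto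
  moreover have "lead_coeff (?r q2) = 1" using l2 by (simp add: of_int_hom.hom_lead_coeff)
  hence "c2 * lead_coeff G = 1" unfolding e2' by (cases "c2 = 0") auto
  ultimately have "c1 = c2" by (metis mult_cancel_right mult_zero_left zero_neq_one)
  hence "?r q1 = ?r q2" using e1' e2' by simp
  thus ?thesis by (rule of_int_poly_hom.injectivity)
qed



definition qp :: "nat \<Rightarrow> (nat \<Rightarrow> int) \<Rightarrow> int poly" where
  "qp n a = Poly (map (\<lambda>j. a (n - j)) [0..<n] @ [1])"

lemma coeff_qp: "coeff (qp n a) j = (if j < n then a (n - j) else if j = n then 1 else 0)"
  unfolding qp_def coeff_Poly nth_default_def by (auto simp: nth_append)

lemma degree_qp: "degree (qp n a) = n"
proof (rule antisym)
  show "degree (qp n a) \<le> n" by (rule degree_le) (simp add: coeff_qp)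
  show "n \<le> degree (qp n a)" by (rule le_degree) (simp add: coeff_qp)
qed

lemma lead_qp: "lead_coeff (qp n a) = 1"
  by (simp add: degree_qp coeff_qp)

lemma ipoly_qp:
  fixes y :: "'b::field_char_0"
  shows "ipoly (qp n a) y = y^n + (\<Sum>j<n. of_int (a (n - j)) * y^j)"
proof -
  have "ipoly (qp n a) y = (\<Sum>j\<le>n. of_int (coeff (qp n a) j) * y^j)"
    unfolding ipoly_def poly_altdef by (simp add: of_int_hom.degree_map_poly_hom degree_qp)
  also have "\<dots> = (\<Sum>j<n. of_int (coeff (qp n a) j) * y^j) + of_int (coeff (qp n a) n) * y^n"
    by (simp add: lessThan_Suc_atMost[symmetric])
  also have "\<dots> = (\<Sum>j<n. of_int (a (n - j)) * y^j) + y^n"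
    by (simp add: coeff_qp)
  finally show ?thesis by simp
qed

definition X2 :: "int poly" where "X2 = [:1,0,1:]"

definition pp :: "nat \<Rightarrow> int poly \<Rightarrow> int poly" where
  "pp n q = (\<Sum>j\<le>n. Polynomial.smult (coeff q j) (monom 1 (n-j) * X2^j))"

lemma degree_X2pow: "degree (X2^j) = 2*j" and lead_X2pow: "lead_coeff (X2^j) = 1"
proof -
  have "X2 \<noteq> 0" "degree X2 = 2" "lead_coeff X2 = 1" unfolding X2_def by auto
  thus d: "degree (X2^j) = 2*j" by (simp add: degree_power_eq)
  have "lead_coeff (X2^j) = lead_coeff X2 ^ j" by (rule lead_coeff_power)
  thus "lead_coeff (X2^j) = 1" using \<open>lead_coeff X2 = 1\<close> by simp
qed

lemma coeff_pp_high:
  assumes "degree q = n" "lead_coeff q = 1" "m \<ge> 2*n"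
  shows "coeff (pp n q) m = (if m = 2*n then 1 else 0)"
proof -
  have t: "coeff q j * coeff (monom 1 (n-j) * X2^j) m = (if j = n \<and> m = 2*n then 1 else 0)"
    if j: "j \<le> n" for j
  proof -
    have "coeff (monom 1 (n-j) * X2^j) m = coeff (X2^j) (m - (n-j))"
      using j assms(3) by (simp add: coeff_monom_mult)
    also have "\<dots> = (if j = n \<and> m = 2*n then 1 else 0)"
    proof (cases "j = n \<and> m = 2*n")
      case True
      thus ?thesis using lead_X2pow[of n] degree_X2pow[of n] by simp
    next
      case False
      hence "m - (n - j) > degree (X2^j)" using j assms(3) unfolding degree_X2pow by auto
      thus ?thesis using False by (simp add: coeff_eq_0)
    qed
    finally show ?thesis using assms(1,2) by auto
  qed
  have "coeff (pp n q) m = (\<Sum>j\<le>n. coeff q j * coeff (monom 1 (n-j) * X2^j) m)"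
    unfolding pp_def by (simp add: coeff_sum)
  also have "\<dots> = (\<Sum>j\<le>n. (if j = n \<and> m = 2*n then 1 else 0))"
    by (rule sum.cong) (auto simp: t)
  also have "\<dots> = (if m = 2*n then 1 else 0)"
    by (simp add: lessThan_Suc_atMost[symmetric])
  finally show ?thesis .
qed

lemma degree_pp:
  assumes "degree q = n" "lead_coeff q = 1"
  shows "degree (pp n q) = 2*n" and "lead_coeff (pp n q) = 1"
proof -
  show d: "degree (pp n q) = 2*n"
  proof (rule antisym)
    show "degree (pp n q) \<le> 2*n" by (rule degree_le) (use coeff_pp_high[OF assms] in auto)
    show "2*n \<le> degree (pp n q)" by (rule le_degree) (use coeff_pp_high[OF assms] in auto)
  qed
  show "lead_coeff (pp n q) = 1" unfolding d using coeff_pp_high[OF assms] by simp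
qed

lemma coeff_pp_0:
  assumes "degree q = n" "lead_coeff q = 1"
  shows "coeff (pp n q) 0 = 1"
proof -
  have "coeff (pp n q) 0 = poly (pp n q) 0" by (simp add: poly_0_coeff_0)
  also have "\<dots> = (\<Sum>j\<le>n. coeff q j * (0::int)^(n-j) * poly (X2^j) 0)"
    unfolding pp_def by (simp add: poly_sum poly_monom mult.assoc)
  also have "\<dots> = (\<Sum>j<n. coeff q j * (0::int)^(n-j) * poly (X2^j) 0) + coeff q n * poly (X2^n) 0"
    by (simp add: lessThan_Suc_atMost[symmetric])
  also have "(\<Sum>j<n. coeff q j * (0::int)^(n-j) * poly (X2^j) 0) = 0"
    by (rule sum.neutral) auto
  also have "poly (X2^n) 0 = 1" unfolding X2_def by (simp add: poly_power)
  finally show ?thesis using assms by simp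
qed

lemma ipoly_pp:
  fixes t :: "'b::field_char_0"
  assumes "degree q = n" "t \<noteq> 0"
  shows "ipoly (pp n q) t = t^n * ipoly q (t + 1/t)"
proof -
  have pw: "t^(n-j) * (t^2+1)^j = t^n * (t + 1/t)^j" if "j \<le> n" for j
  proof -
    have "t^n = t^(n-j) * t^j" using that by (simp add: power_add[symmetric])
    moreover have "t^j * (t + 1/t)^j = (t^2+1)^j"
      using assms(2) by (simp add: power_mult_distrib[symmetric] field_simps power2_eq_square)
    ultimately show ?thesis by (simp add: mult.assoc)
  qed
  have "ipoly (pp n q) t = (\<Sum>j\<le>n. of_int (coeff q j) * (t^(n-j) * (t^2+1)^j))"
    unfolding ipoly_def pp_def X2_def
    by (simp add: of_int_poly_hom.hom_sum poly_sum poly_monom poly_power power2_eq_square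
        hom_distribs algebra_simps)
  also have "\<dots> = (\<Sum>j\<le>n. t^n * (of_int (coeff q j) * (t + 1/t)^j))"
    by (rule sum.cong) (auto simp: pw)
  also have "\<dots> = t^n * (\<Sum>j\<le>n. of_int (coeff q j) * (t + 1/t)^j)"
    by (simp add: sum_distrib_left)
  also have "(\<Sum>j\<le>n. of_int (coeff q j) * (t + 1/t)^j) = ipoly q (t + 1/t)"
    unfolding ipoly_def poly_altdef by (simp add: of_int_hom.degree_map_poly_hom assms(1))
  finally show ?thesis .
qed

lemma pal_pp:
  assumes dq: "degree q = n" and lq: "lead_coeff q = 1"
  shows "palindromic (pp n q)"
proof -
  define P where "P = (map_poly of_int (pp n q) :: complex poly)"
  have dP: "degree P = 2*n" unfolding P_def using degree_pp[OF dq lq]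
    by (simp add: of_int_hom.degree_map_poly_hom)
  have lP: "lead_coeff P = 1" unfolding P_def using degree_pp[OF dq lq]
    by (simp add: of_int_hom.hom_lead_coeff)
  have "poly (reflect_poly P) = poly P"
  proof
    fix t :: complex
    show "poly (reflect_poly P) t = poly P t"
    proof (cases "t = 0")
      case True
      have "poly (reflect_poly P) 0 = 1" using lP by (simp add: poly_0_coeff_0 coeff_0_reflect_poly)
      moreover have "poly P 0 = 1" unfolding P_def using coeff_pp_0[OF dq lq] by (simp add: poly_0_coeff_0)
      ultimately show ?thesis using True by simp
    next
      case False
      have "poly (reflect_poly P) t = t^(2*n) * poly P (inverse t)"
        using False dP by (simp add: poly_reflect_poly_nz)
      also have "poly P (inverse t) = (1/t)^n * ipoly q (1/t + t)"
        unfolding P_def using ipoly_pp[OF dq, of "1/t"] False by (simp add: ipoly_def divide_inverse)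
      also have "poly P t = t^n * ipoly q (t + 1/t)"
        unfolding P_def using ipoly_pp[OF dq False] by (simp add: ipoly_def)
      moreover have "t^(2*n) * ((1/t)^n * ipoly q (1/t + t)) = t^n * ipoly q (t + 1/t)"
      proof -
        have e1: "1/t + t = t + 1/t" by (rule add.commute)
        have tn: "t^n \<noteq> 0" using False by simp
        have "t^(2*n) * (1/t)^n = t^n * (t^n * (1 / t^n))" by (simp add: mult_2 power_add power_one_over)
        also have "\<dots> = t^n" using tn by simp
        finally have e2: "t^(2*n) * (1/t)^n = t^n" .
        show ?thesis unfolding e1 using e2 by (simp only: mult.assoc[symmetric])
      qed
      ultimately show ?thesis by simp
    qed
  qed
  hence rP: "reflect_poly P = P" by (simp add: poly_eq_poly_eq_iff)
  show ?thesis unfolding palindromic_def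
  proof (intro allI impI)
    fix i assume i: "i \<le> degree (pp n q)"
    hence "i \<le> degree P" unfolding P_def by (simp add: of_int_hom.degree_map_poly_hom)
    hence "coeff (reflect_poly P) i = coeff P (degree P - i)"
      by (simp add: coeff_reflect_poly)
    hence "coeff P i = coeff P (degree P - i)" unfolding rP .
    thus "coeff (pp n q) i = coeff (pp n q) (degree (pp n q) - i)"
      unfolding P_def by (simp add: of_int_hom.degree_map_poly_hom)
  qed
qed


definition rho :: "nat \<Rightarrow> real" where "rho n = 1 / (8 * real n)"
definition eps :: "nat \<Rightarrow> real" where "eps n = rho n ^ n / (8 * real n ^ 2)"

lemma rho_pos: "n \<ge> 1 \<Longrightarrow> rho n > 0" unfolding rho_def by simp
lemma rho_le: "n \<ge> 2 \<Longrightarrow> rho n \<le> 1/16" unfolding rho_def by (simp add: field_simps)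
lemma eps_pos: "n \<ge> 1 \<Longrightarrow> eps n > 0" unfolding eps_def using rho_pos by simp
lemma eps_le: assumes "n \<ge> 2" shows "eps n \<le> 1/512"
proof -
  have r: "0 < rho n" "rho n \<le> 1/16" using assms rho_pos rho_le by auto
  have "rho n ^ n \<le> rho n ^ 1" using r assms by (intro power_decreasing) auto
  hence a: "rho n ^ n \<le> 1/16" using r by simp
  have b: "32 \<le> 8 * real n ^ 2"
  proof -
    have "(2::real)^2 \<le> real n ^ 2" using assms by (intro power_mono) auto
    thus ?thesis by simp
  qed
  have "eps n \<le> (1/16) / 32" unfolding eps_def using a b r
    by (intro frac_le) auto
  thus ?thesis by simp
qed

lemma big_root:
  fixes a :: "nat \<Rightarrow> int" and y :: complex and R :: real
  assumes n: "n \<ge> 2" and R: "R \<ge> 1"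
    and ak: "\<forall>k\<in>{2..n}. \<bar>real_of_int (a k)\<bar> \<le> eps n * R^k"
    and root: "ipoly (qp n a) y = 0" and big: "cmod y \<ge> rho n * R"
  shows "cmod (y + of_int (a 1)) \<le> cmod y / (8 * real n)"
proof -
  define m where "m = n - 1"
  have nm: "n = Suc m" using n unfolding m_def by simp
  define \<rho> where "\<rho> = rho n"
  have rp: "0 < \<rho>" "\<rho> \<le> 1" unfolding \<rho>_def using rho_pos rho_le n by force+
  have yp: "cmod y > 0" using big rp R unfolding \<rho>_def
    by (metis less_le_trans mult_pos_pos zero_less_one less_le_trans[of 0 1 R] le_less_trans linorder_not_less order.strict_trans2)
  have Rle: "R \<le> cmod y / \<rho>" using big rp unfolding \<rho>_def by (simp add: field_simps)
  define S where "S = (\<Sum>j<m. of_int (a (n - j)) * y^j)"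
  have "0 = y^n + (\<Sum>j<n. of_int (a (n - j)) * y^j)" using root ipoly_qp[of n a y] by simp
  also have "(\<Sum>j<n. of_int (a (n - j)) * y^j) = S + of_int (a 1) * y^m"
    unfolding S_def nm by (simp add: nm[symmetric] m_def)
  finally have e0: "0 = y^n + S + of_int (a 1) * y^m" by (simp add: add.assoc)
  have e1a: "y^m * (y + of_int (a 1)) = y^n + of_int (a 1) * y^m" unfolding nm by (simp add: algebra_simps)
  have e1: "y^m * (y + of_int (a 1)) = - S"
    unfolding e1a eq_neg_iff_add_eq_0 using e0 by (simp add: algebra_simps)
  have tb: "cmod (of_int (a (n - j)) * y^j) \<le> eps n * cmod y ^ n / \<rho>^n" if j: "j < m" for j
  proof -
    define k where "k = n - j"
    have k: "k \<in> {2..n}" "k + j = n" using j unfolding k_def m_def by auto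
    have "cmod (of_int (a (n - j)) * y^j) = \<bar>real_of_int (a k)\<bar> * cmod y ^ j"
      unfolding k_def by (simp add: norm_mult norm_power)
    also have "\<dots> \<le> (eps n * R^k) * cmod y ^ j"
      using ak k by (intro mult_right_mono) auto
    also have "R^k \<le> (cmod y / \<rho>)^k" using Rle R by (intro power_mono) auto
    hence "(eps n * R^k) * cmod y ^ j \<le> (eps n * (cmod y / \<rho>)^k) * cmod y ^ j"
      using eps_pos[of n] n by (intro mult_right_mono mult_left_mono) auto
    also have "(cmod y / \<rho>)^k = cmod y ^ k / \<rho>^k" by (simp add: power_divide)
    also have "cmod y ^ k / \<rho>^k \<le> cmod y ^ k / \<rho>^n"
    proof (rule divide_left_mono)
      show "\<rho>^n \<le> \<rho>^k" using rp k by (intro power_decreasing) auto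
      show "0 \<le> cmod y ^ k" by simp
      show "0 < \<rho>^k * \<rho>^n" using rp by simp
    qed
    hence "(eps n * (cmod y ^ k / \<rho>^k)) * cmod y ^ j \<le> (eps n * (cmod y ^ k / \<rho>^n)) * cmod y ^ j"
      using eps_pos[of n] n by (intro mult_right_mono mult_left_mono) auto
    also have "(eps n * (cmod y ^ k / \<rho>^n)) * cmod y ^ j = eps n * cmod y ^ (k + j) / \<rho>^n"
      by (simp add: power_add)
    finally show ?thesis using k by simp
  qed
  have "cmod S \<le> (\<Sum>j<m. cmod (of_int (a (n - j)) * y^j))" unfolding S_def by (rule norm_sum)
  also have "\<dots> \<le> (\<Sum>j<m. eps n * cmod y ^ n / \<rho>^n)" by (rule sum_mono) (use tb in auto)
  also have "\<dots> = real m * (eps n * cmod y ^ n / \<rho>^n)" by simp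
  also have "\<dots> \<le> real n * (eps n * cmod y ^ n / \<rho>^n)"
    using eps_pos[of n] n rp unfolding nm by (intro mult_right_mono) auto
  also have "real n * (eps n * cmod y ^ n / \<rho>^n) = cmod y ^ n / (8 * real n)"
    unfolding eps_def \<rho>_def using n rho_pos[of n] by (simp add: field_simps power2_eq_square)
  finally have "cmod y ^ m * cmod (y + of_int (a 1)) \<le> cmod y ^ n / (8 * real n)"
    using e1 by (metis norm_minus_cancel norm_mult norm_power)
  also have "cmod y ^ n / (8 * real n) = cmod y ^ m * (cmod y / (8 * real n))" unfolding nm by simp
  finally have fin: "cmod y ^ m * cmod (y + of_int (a 1)) \<le> cmod y ^ m * (cmod y / (8 * real n))" .
  show ?thesis by (rule mult_left_le_imp_le[OF fin]) (use yp in simp)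
qed


lemma vieta:
  fixes bs :: "complex list"
  assumes "bs \<noteq> []"
  shows "coeff (\<Prod>b\<leftarrow>bs. [:-b,1:]) (length bs - 1) = - sum_list bs"
  using assms
proof (induction bs)
  case Nil thus ?case by simp
next
  case (Cons b cs)
  show ?case
  proof (cases "cs = []")
    case True thus ?thesis by simp
  next
    case False
    define r where "r = (\<Prod>b\<leftarrow>cs. [:-b,1:])"
    define m where "m = length cs"
    have m1: "m \<ge> 1" using False unfolding m_def by (cases cs) auto
    have dr: "degree r = m" unfolding r_def m_def by (rule degree_prod_lin)
    have "lead_coeff r = (\<Prod>b\<leftarrow>cs. lead_coeff [:-b,1:])" unfolding r_def by (rule lead_coeff_of_prod)
    also have "\<dots> = (\<Prod>b\<leftarrow>cs. (1::complex))" by simp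
    also have "\<dots> = 1" by (induction cs) simp_all
    finally have lr: "lead_coeff r = 1" .
    have IH: "coeff r (m - 1) = - sum_list cs" using Cons.IH False unfolding r_def m_def by simp
    have eq: "(\<Prod>x\<leftarrow>b#cs. [:-x,1:]) = pCons 0 r + Polynomial.smult (-b) r"
      unfolding r_def by simp
    have ix: "length (b#cs) - 1 = Suc (m - 1)" using m1 unfolding m_def by simp
    have "coeff (\<Prod>x\<leftarrow>b#cs. [:-x,1:]) (length (b#cs) - 1) = coeff (pCons 0 r + Polynomial.smult (-b) r) (Suc (m - 1))"
      by (simp only: ix eq)
    also have "\<dots> = coeff r (m - 1) - b * coeff r (Suc (m - 1))" by simp
    also have "Suc (m - 1) = m" using m1 by simp
    also have "coeff r m = 1" using lr dr by simp
    finally show ?thesis using IH by simp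
  qed
qed

lemma sep_sum:
  fixes bs :: "complex list" and c :: complex
  assumes "\<forall>b\<in>set bs. (P b \<and> cmod (b - c) \<le> e) \<or> (\<not> P b \<and> cmod b \<le> e)"
  shows "cmod (sum_list bs - of_nat (length (filter P bs)) * c) \<le> of_nat (length bs) * e"
  using assms
proof (induction bs)
  case Nil thus ?case by simp
next
  case (Cons b cs)
  have IH: "cmod (sum_list cs - of_nat (length (filter P cs)) * c) \<le> of_nat (length cs) * e"
    using Cons by simp
  show ?case
  proof (cases "P b")
    case True
    hence hb: "cmod (b - c) \<le> e" using Cons.prems by auto
    have "sum_list (b#cs) - of_nat (length (filter P (b#cs))) * c = (b - c) + (sum_list cs - of_nat (length (filter P cs)) * c)"
      using True by (simp add: algebra_simps)
    also have "cmod \<dots> \<le> cmod (b - c) + cmod (sum_list cs - of_nat (length (filter P cs)) * c)"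
      by (rule norm_triangle_ineq)
    finally have F: "cmod (sum_list (b#cs) - of_nat (length (filter P (b#cs))) * c) \<le> cmod (b - c) + cmod (sum_list cs - of_nat (length (filter P cs)) * c)" .
    have "cmod (sum_list (b#cs) - of_nat (length (filter P (b#cs))) * c) \<le> e + of_nat (length cs) * e"
      using F hb IH by linarith
    thus ?thesis by (simp add: algebra_simps)
  next
    case False
    hence hb: "cmod b \<le> e" using Cons.prems by auto
    have "sum_list (b#cs) - of_nat (length (filter P (b#cs))) * c = b + (sum_list cs - of_nat (length (filter P cs)) * c)"
      using False by (simp add: algebra_simps)
    also have "cmod \<dots> \<le> cmod b + cmod (sum_list cs - of_nat (length (filter P cs)) * c)"
      by (rule norm_triangle_ineq)
    finally have F: "cmod (sum_list (b#cs) - of_nat (length (filter P (b#cs))) * c) \<le> cmod b + cmod (sum_list cs - of_nat (length (filter P cs)) * c)" .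
    have "cmod (sum_list (b#cs) - of_nat (length (filter P (b#cs))) * c) \<le> e + of_nat (length cs) * e"
      using F hb IH by linarith
    thus ?thesis by (simp add: algebra_simps)
  qed
qed

lemma poly_prod_lin: "poly (\<Prod>b\<leftarrow>bs. [:-b,1:]) (z::'a::comm_ring_1) = (\<Prod>b\<leftarrow>bs. z - b)"
  by (induction bs) (auto simp: algebra_simps)


lemma qp_roots:
  fixes a :: "nat \<Rightarrow> int"
  obtains bs :: "complex list" where "length bs = n"
    "\<And>z. ipoly (qp n a) z = 0 \<longleftrightarrow> z \<in> set bs"
    "(\<Prod>b\<leftarrow>bs. [:-b,1:]) = map_poly of_int (qp n a)"
proof -
  let ?Q = "map_poly of_int (qp n a) :: complex poly"
  obtain bs where bs: "Polynomial.smult (coeff ?Q (degree ?Q)) (\<Prod>a\<leftarrow>bs. [:- a, 1:]) = ?Q"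
    "length bs = degree ?Q"
    using fundamental_theorem_algebra_factorized by blast
  have dQ: "degree ?Q = n" by (simp add: of_int_hom.degree_map_poly_hom degree_qp)
  have lQ: "coeff ?Q (degree ?Q) = 1" using lead_qp[of n a] by (simp add: of_int_hom.degree_map_poly_hom)
  have eq: "(\<Prod>b\<leftarrow>bs. [:-b,1:]) = ?Q" using bs(1) lQ by simp
  have "ipoly (qp n a) z = 0 \<longleftrightarrow> z \<in> set bs" for z
  proof -
    have "ipoly (qp n a) z = (\<Prod>b\<leftarrow>bs. z - b)" unfolding ipoly_def eq[symmetric] by (rule poly_prod_lin)
    also have "\<dots> = 0 \<longleftrightarrow> z \<in> set bs" by (auto simp: prod_list_zero_iff)
    finally show ?thesis .
  qed
  thus ?thesis using that bs(2) dQ eq by auto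
qed

lemma ipoly_cnj: "ipoly p (cnj z) = cnj (ipoly p z)"
proof -
  have "map_poly cnj (map_poly of_int p :: complex poly) = map_poly of_int p"
    by (simp add: map_poly_map_poly o_def)
  thus ?thesis unfolding ipoly_def using poly_cnj[of "map_poly of_int p" z] by simp
qed

lemma root_struct:
  fixes a :: "nat \<Rightarrow> int" and R :: real
  assumes n: "n \<ge> 2" and R: "R \<ge> 5"
    and a1l: "-(1/2 + eps n) * R \<le> a 1" and a1u: "a 1 \<le> -R/2"
    and ak: "\<forall>k\<in>{2..n}. \<bar>real_of_int (a k)\<bar> \<le> eps n * R^k"
  shows "\<exists>y1::real. ipoly (qp n a) y1 = 0 \<and> 8*R/17 \<le> y1 \<and> y1 \<le> R \<and>
           (\<forall>y::complex. ipoly (qp n a) y = 0 \<longrightarrow> y = of_real y1 \<or> cmod y < rho n * R)"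
proof -
  obtain bs :: "complex list" where len: "length bs = n"
    and rt: "\<And>z. ipoly (qp n a) z = 0 \<longleftrightarrow> z \<in> set bs"
    and eq: "(\<Prod>b\<leftarrow>bs. [:-b,1:]) = map_poly of_int (qp n a)" using qp_roots[where n=n and a=a] by blast
  define N where "N = real n"
  have N2: "N \<ge> 2" unfolding N_def using n by simp
  define A where "A = - real_of_int (a 1)"
  have A1: "A \<ge> R/2" "A \<le> (1/2 + eps n) * R" unfolding A_def using a1l a1u by (auto simp: algebra_simps)
  have R1: "R \<ge> 1" using R by simp
  have rhoN: "rho n * R = R / (8*N)" unfolding rho_def N_def by simp
  define P where "P b = (cmod b \<ge> rho n * R)" for b :: complex
  have a1c: "(of_int (a 1) :: complex) = - of_real A" unfolding A_def by simp
  have each: "(P b \<and> cmod (b - of_real A) \<le> A/(4*N)) \<or> (\<not> P b \<and> cmod b \<le> A/(4*N))"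
    if b: "b \<in> set bs" for b
  proof (cases "P b")
    case True
    have rb: "ipoly (qp n a) b = 0" using rt b by simp
    have v: "cmod (b + of_int (a 1)) \<le> cmod b / (8 * N)"
      using big_root[OF n R1 ak rb] True unfolding P_def N_def by simp
    define u where "u = cmod b"
    define w where "w = cmod (b - of_real A)"
    have wv: "w = cmod (b + of_int (a 1))" unfolding w_def a1c by simp
    have "u \<le> w + A"
    proof -
      have "cmod b \<le> cmod (b - of_real A) + cmod (of_real A :: complex)"
        using norm_triangle_ineq[of "b - of_real A" "of_real A"] by simp
      moreover have "cmod (of_real A :: complex) = A" using A1 R by simp
      ultimately show ?thesis unfolding u_def w_def by simp
    qed
    moreover have "8 * N * w \<le> u"
    proof -
      have "w \<le> u / (8 * N)" using v unfolding wv[symmetric] u_def .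
      hence "w * (8 * N) \<le> u" using N2 by (subst (asm) pos_le_divide_eq) auto
      thus ?thesis by (simp add: mult.commute)
    qed
    ultimately have "(8 * N - 1) * w \<le> A" by (simp add: algebra_simps)
    moreover have "4 * N * w \<le> (8 * N - 1) * w" using N2 unfolding w_def by (intro mult_right_mono) auto
    ultimately have "4 * N * w \<le> A" by linarith
    hence "w * (4 * N) \<le> A" by (simp add: mult.commute)
    hence "w \<le> A / (4*N)" using N2 by (subst pos_le_divide_eq) auto
    thus ?thesis using True unfolding w_def by simp
  next
    case False
    hence "cmod b < R / (8*N)" unfolding P_def rhoN by simp
    also have "R / (8*N) \<le> A / (4*N)"
    proof -
      have "R / (8*N) = (R/2) / (4*N)" by simp
      also have "\<dots> \<le> A / (4*N)" using A1 N2 by (intro divide_right_mono) auto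
      finally show ?thesis .
    qed
    finally show ?thesis using False by simp
  qed
  define k where "k = length (filter P bs)"
  have ss: "cmod (sum_list bs - of_nat k * of_real A) \<le> of_nat (length bs) * (A/(4*N))"
    unfolding k_def by (rule sep_sum) (use each in blast)
  have "of_nat (length bs) * (A/(4*N)) = A/4" unfolding len N_def using n by simp
  note ss = ss[unfolded this]
  have bsne: "bs \<noteq> []" using len n by auto
  have "coeff (map_poly of_int (qp n a) :: complex poly) (n - 1) = of_int (a 1)"
    using n by (simp add: coeff_qp)
  hence "- sum_list bs = - of_real A" using vieta[OF bsne] unfolding eq len a1c by simp
  hence sb: "sum_list bs = of_real A" by simp
  have "cmod (of_real A - of_nat k * of_real A :: complex) = \<bar>1 - real k\<bar> * A"
  proof -
    have e: "(of_real A - of_nat k * of_real A :: complex) = of_real ((1 - real k) * A)" by (simp add: algebra_simps)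
    have "cmod (of_real ((1 - real k) * A) :: complex) = \<bar>(1 - real k) * A\<bar>" by (rule norm_of_real)
    also have "\<dots> = \<bar>1 - real k\<bar> * A" using A1 R by (simp add: abs_mult)
    finally show ?thesis unfolding e .
  qed
  hence "\<bar>1 - real k\<bar> * A \<le> A / 4" using ss sb by simp
  hence "\<bar>1 - real k\<bar> * A \<le> (1/4) * A" by simp
  moreover have "A > 0" using A1 R by linarith
  ultimately have "\<bar>1 - real k\<bar> \<le> 1/4" by (rule mult_right_le_imp_le)
  hence k1: "k = 1" by linarith
  then obtain b0 where fb: "filter P bs = [b0]" unfolding k_def by (auto simp: length_Suc_conv)
  have uniq: "b = b0" if "b \<in> set bs" "P b" for b
  proof -
    have "b \<in> set (filter P bs)" using that by simp
    thus ?thesis using fb by simp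
  qed
  have "b0 \<in> set (filter P bs)" using fb by simp
  hence b0: "b0 \<in> set bs" "P b0" by auto
  have "ipoly (qp n a) (cnj b0) = 0" using rt b0 by (simp add: ipoly_cnj)
  hence "cnj b0 \<in> set bs" using rt by simp
  moreover have "P (cnj b0)" using b0 unfolding P_def by simp
  ultimately have "cnj b0 = b0" using uniq by blast
  hence imb: "Im b0 = 0" by (metis cnj.simps(2) complex.expand neg_equal_zero)
  define y1 where "y1 = Re b0"
  have b0r: "b0 = of_real y1" unfolding y1_def using imb by (simp add: complex_eq_iff)
  have "ipoly (qp n a) (of_real y1 :: complex) = 0" using rt b0 b0r by simp
  hence ry: "ipoly (qp n a) y1 = 0" by (simp add: ipoly_of_real)
  have "cmod (b0 + of_int (a 1)) \<le> cmod b0 / (8 * N)"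
    using big_root[OF n R1 ak] rt b0 unfolding P_def N_def by simp
  hence yb: "\<bar>y1 - A\<bar> \<le> \<bar>y1\<bar> / (8 * N)" unfolding b0r a1c
    by (metis norm_of_real of_real_diff diff_conv_add_uminus)
  have ybig: "\<bar>y1\<bar> \<ge> R / (8*N)" using b0 unfolding P_def b0r rhoN by simp
  have Rp: "R / (8*N) > 0" using R N2 by simp
  have w16: "\<bar>y1\<bar> / (8 * N) \<le> \<bar>y1\<bar> / 16" using N2 by (intro divide_left_mono) auto
  have ypos: "y1 > 0"
  proof (rule ccontr)
    assume "\<not> y1 > 0"
    hence "\<bar>y1 - A\<bar> = \<bar>y1\<bar> + A" using A1 R by auto
    thus False using yb w16 A1 R ybig Rp by linarith
  qed
  have e1: "eps n * R \<le> R / 512" using eps_le[OF n] R by (simp add: mult_right_mono)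
  have lo: "8*R/17 \<le> y1" using yb w16 ypos A1 by (simp add: abs_if split: if_splits) linarith?
  have hi: "y1 \<le> R" using yb w16 ypos A1 e1 by (simp add: abs_if algebra_simps split: if_splits) linarith?
  have all: "\<forall>y::complex. ipoly (qp n a) y = 0 \<longrightarrow> y = of_real y1 \<or> cmod y < rho n * R"
  proof (intro allI impI)
    fix y :: complex assume "ipoly (qp n a) y = 0"
    hence "y \<in> set bs" using rt by simp
    thus "y = of_real y1 \<or> cmod y < rho n * R" using uniq b0r unfolding P_def by force
  qed
  show ?thesis using ry lo hi all by blast
qed


definition xf :: "real \<Rightarrow> real" where "xf y = (y + sqrt (y^2 - 4)) / 2"

lemma xf_props:
  assumes y: "y > 2"
  shows "xf y > 1" "xf y \<le> y" "xf y * (y - xf y) = 1" "xf y + 1 / xf y = y" "xf y \<ge> y - 1"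
proof -
  define s where "s = sqrt (y^2 - 4)"
  have y4: "(2::real)^2 \<le> y^2" using y by (intro power_mono) auto
  have s0: "s \<ge> 0" unfolding s_def using y4 by simp
  from y4 have s2: "s^2 = y^2 - 4" unfolding s_def by simp
  have sy: "s \<le> y"
  proof -
    have "y^2 - 4 \<le> y^2" by simp
    hence "sqrt (y^2 - 4) \<le> sqrt (y^2)" by (rule real_sqrt_le_mono)
    thus ?thesis unfolding s_def using y by simp
  qed
  have x: "xf y = (y + s)/2" unfolding xf_def s_def ..
  show x1: "xf y > 1" unfolding x using s0 y by simp
  show "xf y \<le> y" unfolding x using sy by simp
  have tx: "2 * xf y = y + s" unfolding x by simp
  have "4 * (xf y * (y - xf y)) = (2 * xf y) * (2 * y - 2 * xf y)" by (simp add: algebra_simps)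
  also have "\<dots> = (y + s) * (y - s)" unfolding tx by (simp add: algebra_simps)
  also have "\<dots> = y^2 - s^2" by (simp add: power2_eq_square algebra_simps)
  also have "\<dots> = 4" using s2 by simp
  finally show p: "xf y * (y - xf y) = 1" by simp
  have "1 / xf y = y - xf y" using p x1 by (simp add: divide_eq_eq mult.commute)
  thus "xf y + 1 / xf y = y" by simp
  have "1 / xf y \<le> 1" using x1 by (auto simp: divide_le_eq_1)
  thus "xf y \<ge> y - 1" using \<open>1 / xf y = y - xf y\<close> by simp
qed

lemma t_bound:
  fixes t :: complex
  assumes "t \<noteq> 0"
  shows "cmod t \<le> cmod (t + 1/t) + 1"
proof (cases "cmod t \<le> 1")
  case True thus ?thesis by (smt (verit) norm_ge_zero)
next
  case False
  have "cmod t = cmod ((t + 1/t) - 1/t)" by simp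
  also have "\<dots> \<le> cmod (t + 1/t) + cmod (1/t)" by (rule norm_triangle_ineq4)
  also have "cmod (1/t) \<le> 1" using False by (auto simp: norm_divide divide_le_eq_1)
  finally show ?thesis by simp
qed

lemma in_B:
  fixes a :: "nat \<Rightarrow> int"
  assumes n: "n \<ge> 2" and R: "R \<ge> 5" and root: "ipoly (qp n a) y1 = 0"
    and lo: "8*R/17 \<le> y1" and hi: "y1 \<le> R"
    and all: "\<forall>y::complex. ipoly (qp n a) y = 0 \<longrightarrow> y = of_real y1 \<or> cmod y < rho n * R"
  shows "xf y1 \<in> B n R" and "xf y1 + 1 / xf y1 = y1"
proof -
  define x where "x = xf y1"
  define q where "q = qp n a"
  define p where "p = pp n q"
  have y2: "y1 > 2" using lo R by linarith
  note xp = xf_props[OF y2, folded x_def]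
  show "xf y1 + 1 / xf y1 = y1" using xp by (simp add: x_def)
  have dq: "degree q = n" and lq: "lead_coeff q = 1" unfolding q_def by (simp_all add: degree_qp coeff_qp)
  have dp: "degree p = 2*n" and lp: "lead_coeff p = 1" unfolding p_def using degree_pp[OF dq lq] by auto
  have pal: "palindromic p" unfolding p_def by (rule pal_pp[OF dq lq])
  have c0: "coeff p 0 = 1" unfolding p_def by (rule coeff_pp_0[OF dq lq])
  have x0: "x \<noteq> 0" using xp by simp
  have "ipoly p x = x^n * ipoly q (x + 1/x)" unfolding p_def by (rule ipoly_pp[OF dq x0])
  also have "x + 1/x = y1" using xp by simp
  finally have px: "ipoly p x = 0" using root unfolding q_def by simp
  have rho16: "rho n * R \<le> R / 16" using rho_le[OF n] R by (simp add: mult_right_mono)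
  have roots: "cmod t \<le> x" if t: "ipoly p t = 0" for t :: complex
  proof -
    have "ipoly p (0::complex) = 1" using c0 by (simp add: ipoly_0_coeff)
    hence t0: "t \<noteq> 0" using t by auto
    have "ipoly p t = t^n * ipoly q (t + 1/t)" unfolding p_def by (rule ipoly_pp[OF dq t0])
    hence qt: "ipoly q (t + 1/t) = 0" using t t0 by simp
    from all qt have cs: "t + 1/t = of_real y1 \<or> cmod (t + 1/t) < rho n * R" unfolding q_def by blast
    thus ?thesis
    proof
      assume e: "t + 1/t = of_real y1"
      have "t * t + 1 = (t + 1/t) * t" using t0 by (simp add: distrib_right)
      hence tt: "t * t + 1 = of_real y1 * t" unfolding e .
      have "(t - of_real x) * (t - of_real (y1 - x)) = t * t - of_real y1 * t + of_real (x * (y1 - x))"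
        by (simp add: algebra_simps)
      also have "\<dots> = 0" using tt xp(3) unfolding x_def by (simp add: algebra_simps)
      finally have d: "t = of_real x \<or> t = of_real (y1 - x)" by simp
      have x1: "x > 1" using xp(1) unfolding x_def .
      have h: "0 < y1 - x" "y1 - x \<le> x"
      proof -
        have "y1 - x = 1 / x" using xp(4) unfolding x_def by linarith
        moreover have "0 < 1 / x" "1 / x \<le> 1" using x1 by (auto simp: divide_le_eq_1)
        ultimately show "0 < y1 - x" "y1 - x \<le> x" using x1 by linarith+
      qed
      from d show ?thesis
      proof
        assume "t = of_real x"
        hence "cmod t = \<bar>x\<bar>" by simp
        thus ?thesis using x1 by simp
      next
        assume "t = of_real (y1 - x)"
        hence "cmod t = \<bar>y1 - x\<bar>" by (simp only: norm_of_real)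
        thus ?thesis using h by simp
      qed
    next
      assume "cmod (t + 1/t) < rho n * R"
      hence "cmod t < rho n * R + 1" using t_bound[OF t0] by linarith
      moreover have "rho n * R + 1 \<le> x" using rho16 xp(5) lo R unfolding x_def by linarith
      ultimately show ?thesis by simp
    qed
  qed
  have mpl: "monic_palindromic_leading x p"
    unfolding monic_palindromic_leading_def using lp pal px roots by blast
  show "xf y1 \<in> B n R" unfolding x_def[symmetric]
    by (rule mpl_imp_B[OF _ _ mpl]) (use xp hi dp in \<open>auto simp: x_def\<close>)
qed



lemma card_cong_interval:
  fixes m r :: int and L U :: real
  assumes m: "m > 0" and r: "0 \<le> r" "r < m" and UL: "U - L \<ge> 2 * m"
  shows "finite {a::int. a mod m = r \<and> L \<le> a \<and> a \<le> U}"
    and "real (card {a::int. a mod m = r \<and> L \<le> a \<and> a \<le> U}) \<ge> (U - L) / (2 * m)"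
proof -
  define S where "S = {a::int. a mod m = r \<and> L \<le> a \<and> a \<le> U}"
  have "S \<subseteq> {\<lceil>L\<rceil>..\<lfloor>U\<rfloor>}" unfolding S_def by (auto simp: ceiling_le_iff le_floor_iff)
  thus finS: "finite {a::int. a mod m = r \<and> L \<le> a \<and> a \<le> U}" unfolding S_def[symmetric]
    using finite_subset by blast
  define lo where "lo = \<lceil>(L - r) / m\<rceil>"
  define hi where "hi = \<lfloor>(U - r) / m\<rfloor>"
  define f where "f j = m * j + r" for j
  have mr: "real_of_int m > 0" using m by simp
  have sub: "f ` {lo..hi} \<subseteq> S"
  proof
    fix z assume "z \<in> f ` {lo..hi}"
    then obtain j where j: "lo \<le> j" "j \<le> hi" and z: "z = f j" by auto
    have "(L - r) / m \<le> j" using j(1) unfolding lo_def by (simp add: ceiling_le_iff)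
    hence "L - r \<le> j * m" using mr by (simp add: pos_divide_le_eq)
    hence l: "L \<le> m * j + r" by (simp add: mult.commute)
    have "j \<le> (U - r) / m" using j(2) unfolding hi_def by (simp add: le_floor_iff)
    hence "j * m \<le> U - r" using mr by (simp add: pos_le_divide_eq)
    hence u: "m * j + r \<le> U" by (simp add: mult.commute)
    have "(m * j + r) mod m = r" using r by simp
    thus "z \<in> S" unfolding S_def z f_def using l u by simp
  qed
  have inj: "inj_on f {lo..hi}" unfolding f_def inj_on_def using m by simp
  have "card {lo..hi} \<le> card S" using card_inj_on_le[OF inj sub] finS unfolding S_def by simp
  hence "real (card {lo..hi}) \<le> real (card S)" by simp
  moreover have "real (card {lo..hi}) \<ge> (U - L) / m - 1"
  proof -
    have c1: "real_of_int lo \<le> (L - r) / m + 1" unfolding lo_def by (rule of_int_ceiling_le_add_one)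
    have c2: "real_of_int hi \<ge> (U - r) / m - 1" unfolding hi_def using floor_correct[of "(U - r)/m"] by linarith
    have e: "(U - r) / m - (L - r) / m = (U - L) / m" by (simp add: diff_divide_distrib)
    have "(U - L) / m \<ge> 2" using UL mr by (simp add: pos_le_divide_eq)
    hence "real_of_int (hi - lo + 1) \<ge> (U - L) / m - 1" using c1 c2 e by simp
    moreover have "hi - lo + 1 \<ge> 0" using calculation \<open>(U - L) / m \<ge> 2\<close> by linarith
    ultimately show ?thesis by simp
  qed
  moreover have "(U - L) / m - 1 \<ge> (U - L) / (2 * m)"
  proof -
    have h: "(U - L) / m \<ge> 2" using UL mr by (simp add: pos_le_divide_eq)
    have "(U - L) / (2 * m) = ((U - L) / m) / 2" by simp
    thus ?thesis using h by linarith
  qed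
  ultimately show "real (card {a::int. a mod m = r \<and> L \<le> a \<and> a \<le> U}) \<ge> (U - L) / (2 * m)"
    unfolding S_def by linarith
qed


definition Sk :: "nat \<Rightarrow> real \<Rightarrow> nat \<Rightarrow> int set" where
  "Sk n R k = (if k = 1 then {a. a mod 2 = 0 \<and> -(1/2 + eps n) * R \<le> a \<and> a \<le> -R/2}
     else if k = n then {a. a mod 4 = 2 \<and> 0 \<le> a \<and> a \<le> eps n * R^k}
     else {a. a mod 2 = 0 \<and> 0 \<le> a \<and> a \<le> eps n * R^k})"

definition Fam :: "nat \<Rightarrow> real \<Rightarrow> (nat \<Rightarrow> int) set" where
  "Fam n R = PiE {1..n} (Sk n R)"

lemma Sk_card:
  assumes n: "n \<ge> 2" and R: "R \<ge> 1" and eR: "eps n * R \<ge> 8" and k: "k \<in> {1..n}"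
  shows "finite (Sk n R k) \<and> real (card (Sk n R k)) \<ge> eps n * R^k / 8"
proof -
  have ep: "eps n > 0" using eps_pos n by simp
  have Rk: "R^k \<ge> R" using R k by (metis atLeastAtMost_iff power_increasing power_one_right order_trans[OF zero_le_one] )
  have eRk: "eps n * R^k \<ge> 8" using eR Rk ep by (smt (verit) mult_left_mono)
  show ?thesis
  proof (cases "k = 1")
    case True
    have UL: "(-R/2) - (-(1/2 + eps n) * R) = eps n * R" by (simp add: algebra_simps)
    have c: "finite {a::int. a mod 2 = r \<and> L \<le> a \<and> a \<le> U} \<and> real (card {a::int. a mod 2 = r \<and> L \<le> a \<and> a \<le> U}) \<ge> (U - L) / (2 * 2)"
      if "U - L \<ge> 2 * 2" "0 \<le> r" "r < 2" for U L :: real and r :: int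
    proof -
      have m2: "(0::int) < 2" by simp
      have h: "real_of_int (2 * 2) \<le> U - L" using that(1) by simp
      note cc = card_cong_interval[where m=2 and r=r and L=L and U=U, OF m2 that(2) that(3) h]
      show ?thesis using cc by simp
    qed
    have h4: "2 * 2 \<le> (-R/2) - (-(1/2 + eps n) * R)" using UL eR by simp
    have cc: "finite {a::int. a mod 2 = (0::int) \<and> -(1/2 + eps n) * R \<le> real_of_int a \<and> real_of_int a \<le> -R/2} \<and>
      real (card {a::int. a mod 2 = (0::int) \<and> -(1/2 + eps n) * R \<le> real_of_int a \<and> real_of_int a \<le> -R/2}) \<ge> ((-R/2) - (-(1/2 + eps n) * R)) / (2 * 2)"
      by (rule c[OF h4]) auto
    have "finite (Sk n R k) \<and> real (card (Sk n R k)) \<ge> eps n * R / 4"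
      using cc unfolding Sk_def UL using True by simp
    moreover have "eps n * R / 4 \<ge> eps n * R^k / 8" using True ep R by simp
    ultimately show ?thesis by linarith
  next
    case False
    show ?thesis
    proof (cases "k = n")
      case True
      from card_cong_interval[where m=4 and r=2 and L=0 and U="eps n * R^k"] eRk
      have "finite (Sk n R k) \<and> real (card (Sk n R k)) \<ge> eps n * R^k / 8"
        unfolding Sk_def using False True by simp
      thus ?thesis .
    next
      case False2: False
      from card_cong_interval[where m=2 and r=0 and L=0 and U="eps n * R^k"] eRk
      have "finite (Sk n R k) \<and> real (card (Sk n R k)) \<ge> eps n * R^k / 4"
        unfolding Sk_def using False False2 by simp
      moreover have "eps n * R^k / 4 \<ge> eps n * R^k / 8" using eRk by simp
      ultimately show ?thesis by linarith
    qed
  qed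
qed

lemma Fam_card:
  assumes n: "n \<ge> 2" and R: "R \<ge> 1" and eR: "eps n * R \<ge> 8"
  shows "finite (Fam n R) \<and> real (card (Fam n R)) \<ge> (eps n / 8)^n * R^(n*(n+1) div 2)"
proof -
  have fin: "finite (Fam n R)" unfolding Fam_def
    by (rule finite_PiE) (use Sk_card[OF n R eR] in auto)
  have "real (card (Fam n R)) = (\<Prod>k\<in>{1..n}. real (card (Sk n R k)))"
    unfolding Fam_def by (simp add: card_PiE)
  also have "\<dots> \<ge> (\<Prod>k\<in>{1..n}. eps n / 8 * R^k)"
    by (rule prod_mono) (use Sk_card[OF n R eR] eps_pos[of n] n R in auto)
  moreover have "(\<Prod>k\<in>{1..n}. eps n / 8 * R^k) = (eps n / 8)^n * R^(n*(n+1) div 2)"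
  proof -
    have "2 * (\<Sum>k\<in>{1..n}. k) = n*(n+1)" by (induction n) auto
    hence gs: "(\<Sum>k\<in>{1..n}. k) = n*(n+1) div 2" by simp
    have "(\<Prod>k\<in>{1..n}. eps n / 8 * R^k) = (\<Prod>k\<in>{1..n}. eps n / 8) * (\<Prod>k\<in>{1..n}. R^k)"
      by (rule prod.distrib)
    also have "\<dots> = (eps n / 8)^n * R^(\<Sum>k\<in>{1..n}. k)"
      by (simp add: power_sum)
    finally have "(\<Prod>k\<in>{1..n}. eps n / 8 * R^k) = (eps n / 8)^n * R^(\<Sum>k\<in>{1..n}. k)" .
    thus ?thesis unfolding gs .
  qed
  ultimately show ?thesis using fin by simp
qed

lemma Fam_props:
  assumes n: "n \<ge> 2" and a: "a \<in> Fam n R"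
  shows "-(1/2 + eps n) * R \<le> a 1" "a 1 \<le> -R/2"
    "\<forall>k\<in>{2..n}. \<bar>real_of_int (a k)\<bar> \<le> eps n * R^k"
    "eis (qp n a)"
proof -
  have ak: "a k \<in> Sk n R k" if "k \<in> {1..n}" for k using a that unfolding Fam_def by auto
  have a1: "a 1 \<in> Sk n R 1" using ak n by simp
  thus "-(1/2 + eps n) * R \<le> a 1" "a 1 \<le> -R/2" unfolding Sk_def by auto
  show "\<forall>k\<in>{2..n}. \<bar>real_of_int (a k)\<bar> \<le> eps n * R^k"
  proof
    fix k assume k: "k \<in> {2..n}"
    hence "a k \<in> Sk n R k" using ak by simp
    moreover have "k \<noteq> 1" using k by simp
    ultimately have "0 \<le> a k" "a k \<le> eps n * R^k" unfolding Sk_def by (auto split: if_splits)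
    thus "\<bar>real_of_int (a k)\<bar> \<le> eps n * R^k" by simp
  qed
  have ev: "even (a k)" if "k \<in> {1..n}" for k
  proof -
    have "a k \<in> Sk n R k" using ak that by simp
    hence "a k mod 2 = 0 \<or> a k mod 4 = 2" unfolding Sk_def by (auto split: if_splits)
    thus ?thesis by (metis dvd_imp_mod_0 even_of_nat even_numeral mod_mod_cancel mod_0_imp_dvd
        one_add_one numeral_Bit0 numeral_One)
  qed
  have an: "a n mod 4 = 2"
  proof -
    have "a n \<in> Sk n R n" using ak n by simp
    thus ?thesis unfolding Sk_def using n by simp
  qed
  show "eis (qp n a)" unfolding eis_def
  proof (intro conjI allI impI)
    show "lead_coeff (qp n a) = 1" by (rule lead_qp)
    fix j assume "j < degree (qp n a)"
    hence j: "j < n" by (simp add: degree_qp)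
    thus "even (coeff (qp n a) j)" using ev[of "n - j"] by (simp add: coeff_qp)
  next
    have "coeff (qp n a) 0 = a n" using n by (simp add: coeff_qp)
    thus "\<not> 4 dvd coeff (qp n a) 0" using an by auto
  qed
qed


lemma B_lower:
  assumes n: "n \<ge> 2" and R: "R \<ge> 5" and eR: "eps n * R \<ge> 8"
  shows "real (card (Fam n R)) \<le> real (card (B n R))"
proof -
  define Good where "Good a y1 \<longleftrightarrow> ipoly (qp n a) y1 = 0 \<and> 8*R/17 \<le> y1 \<and> y1 \<le> R \<and>
           (\<forall>y::complex. ipoly (qp n a) y = 0 \<longrightarrow> y = of_real y1 \<or> cmod y < rho n * R)" for a y1
  define Y where "Y a = (SOME y1. Good a y1)" for a
  define \<Phi> where "\<Phi> a = xf (Y a)" for a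
  have R1: "R \<ge> 1" using R by simp
  have GY: "Good a (Y a)" if a: "a \<in> Fam n R" for a
  proof -
    note fp = Fam_props[OF n a]
    have "\<exists>y1. Good a y1" unfolding Good_def by (rule root_struct[OF n R fp(1) fp(2) fp(3)])
    thus ?thesis unfolding Y_def by (rule someI_ex)
  qed
  have inB: "\<Phi> a \<in> B n R" and inv: "\<Phi> a + 1 / \<Phi> a = Y a" if a: "a \<in> Fam n R" for a
    using in_B[OF n R, of a "Y a"] GY[OF a] unfolding Good_def \<Phi>_def by auto
  have sub: "\<Phi> ` Fam n R \<subseteq> B n R" using inB by blast
  have inj: "inj_on \<Phi> (Fam n R)"
  proof
    fix a b assume a: "a \<in> Fam n R" and b: "b \<in> Fam n R" and e: "\<Phi> a = \<Phi> b"
    have "Y a = Y b" using inv[OF a] inv[OF b] e by simp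
    hence ra: "ipoly (qp n a) (Y a) = 0" and rb: "ipoly (qp n b) (Y a) = 0"
      using GY[OF a] GY[OF b] unfolding Good_def by auto
    have "qp n a = qp n b"
      by (rule common_root_eq[OF Fam_props(4)[OF n a] Fam_props(4)[OF n b] _ ra rb]) (simp add: degree_qp)
    show "a = b"
    proof (rule PiE_ext)
      show "a \<in> PiE {1..n} (Sk n R)" using a unfolding Fam_def .
      show "b \<in> PiE {1..n} (Sk n R)" using b unfolding Fam_def .
      fix k assume k: "k \<in> {1..n}"
      have "coeff (qp n a) (n - k) = coeff (qp n b) (n - k)" using \<open>qp n a = qp n b\<close> by simp
      thus "a k = b k" using k by (simp add: coeff_qp)
    qed
  qed
  have finB: "finite (B n R)" using B_upper[OF R1] by blast
  have "card (Fam n R) \<le> card (B n R)" using card_inj_on_le[OF inj sub finB] .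
  thus ?thesis by simp
qed

theorem lemma8:
  fixes n :: nat
  assumes "n \<ge> 2"
  shows "\<exists>C>0. \<forall>\<^sub>F R in at_top.
     (1 / C) * R ^ (n * (n + 1) div 2) \<le> real (card (B n R)) \<and>
     real (card (B n R)) \<le> C * R ^ (n * (n + 1) div 2)"
proof -
  define N where "N = n * (n + 1) div 2"
  define C1 :: real where "C1 = (2 * real n + 1) * (3 * 4^n)^(n+1)"
  define C2 :: real where "C2 = (8 / eps n)^n"
  define C where "C = max C1 C2"
  have ep: "eps n > 0" using eps_pos assms by simp
  have C1p: "C1 > 0" unfolding C1_def by simp
  have C2p: "C2 > 0" unfolding C2_def using ep by simp
  have Cp: "C > 0" unfolding C_def using C1p by simp
  have ev: "\<forall>\<^sub>F R in at_top. R \<ge> max 5 (8 / eps n)" by (rule eventually_ge_at_top)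
  have "\<forall>\<^sub>F R in at_top. (1 / C) * R ^ N \<le> real (card (B n R)) \<and> real (card (B n R)) \<le> C * R ^ N"
    using ev
  proof eventually_elim
    fix R :: real assume R0: "R \<ge> max 5 (8 / eps n)"
    have R: "R \<ge> 5" and R1: "R \<ge> 1" using R0 by auto
    have eR: "eps n * R \<ge> 8"
    proof -
      have "8 / eps n \<le> R" using R0 by simp
      thus ?thesis using ep by (simp add: pos_divide_le_eq mult.commute)
    qed
    have RN: "R ^ N \<ge> 0" using R1 by simp
    have up1: "real (card (B n R)) \<le> real (card (PS n R))" using B_upper[OF R1] by simp
    have up2: "real (card (PS n R)) \<le> C1 * R ^ N"
      using PS_card[OF R1, of n] unfolding C1_def N_def by (simp add: mult.assoc)
    have "C1 * R ^ N \<le> C * R ^ N" unfolding C_def using RN by (intro mult_right_mono) auto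
    hence upper: "real (card (B n R)) \<le> C * R ^ N" using up1 up2 by linarith
    have "(1 / C) * R ^ N \<le> (1 / C2) * R ^ N"
    proof (rule mult_right_mono)
      show "1 / C \<le> 1 / C2" unfolding C_def using C2p by (intro divide_left_mono) auto
    qed (use RN in auto)
    also have "1 / C2 = (eps n / 8)^n" unfolding C2_def by (simp add: power_divide)
    also have "(eps n / 8)^n * R ^ N \<le> real (card (Fam n R))"
      using Fam_card[OF assms R1 eR] unfolding N_def by simp
    also have "\<dots> \<le> real (card (B n R))" by (rule B_lower[OF assms R eR])
    finally show "(1 / C) * R ^ N \<le> real (card (B n R)) \<and> real (card (B n R)) \<le> C * R ^ N"
      using upper by simp
  qed
  thus ?thesis using Cp unfolding N_def by blast
qed


end
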